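(* Let $\mu=g\,dx$ be a finite Borel measure on $\mathbb{R}^d$ absolutely continuous with respect to Lebesgue measure, with density $g\ge0$. If $\mu$ admits a tight frame measure (in particular a Plancherel measure), then $g$ is a constant multiple of the characteristic function of a set (its support) Lebesgue-a.e. Consequently, if $g$ is not a constant multiple of a characteristic function, then $\mu$ admits no tight frame of weighted exponentials $\{w_\lambda e_\lambda:\lambda\in\Lambda\}$ ($w_\lambda\in\mathbb{C}$) for $L^2(\mu)$, and in particular no orthonormal basis of exponentials. *)

theory Defs
  imports "HOL-Analysis.Analysis"
begin

text \<open>Setting: mu = g dx on a Euclidean space 'a (playing the role of R^d).
  Exponentials e_t(x) = exp(2 pi i t.x).\<close>

definition exp_fun :: "'a::euclidean_space \<Rightarrow> 'a \<Rightarrow> complex" where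
  "exp_fun t x = exp (2 * complex_of_real pi * \<i> * complex_of_real (t \<bullet> x))"

definition in_L2 :: "('a::euclidean_space \<Rightarrow> real) \<Rightarrow> ('a \<Rightarrow> complex) \<Rightarrow> bool" where
  "in_L2 g f \<longleftrightarrow> f \<in> borel_measurable borel \<and>
     integrable lborel (\<lambda>x. g x * (cmod (f x))\<^sup>2)"

definition L2_norm_sq :: "('a::euclidean_space \<Rightarrow> real) \<Rightarrow> ('a \<Rightarrow> complex) \<Rightarrow> real" where
  "L2_norm_sq g f = (\<integral>x. g x * (cmod (f x))\<^sup>2 \<partial>lborel)"

definition inner_exp :: "('a::euclidean_space \<Rightarrow> real) \<Rightarrow> ('a \<Rightarrow> complex) \<Rightarrow> 'a \<Rightarrow> complex" where
  "inner_exp g f t = (\<integral>x. complex_of_real (g x) * f x * cnj (exp_fun t x) \<partial>lborel)"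

definition tight_frame_measure :: "('a::euclidean_space \<Rightarrow> real) \<Rightarrow> 'a measure \<Rightarrow> bool" where
  "tight_frame_measure g \<nu> \<longleftrightarrow> sets \<nu> = sets borel \<and>
     (\<exists>A>0. \<forall>f. in_L2 g f \<longrightarrow>
        (\<integral>\<^sup>+ t. ennreal ((cmod (inner_exp g f t))\<^sup>2) \<partial>\<nu>) = ennreal (A * L2_norm_sq g f))"

definition tight_weighted_exp_frame ::
  "('a::euclidean_space \<Rightarrow> real) \<Rightarrow> 'a set \<Rightarrow> ('a \<Rightarrow> complex) \<Rightarrow> bool" where
  "tight_weighted_exp_frame g \<Lambda> w \<longleftrightarrow>
     (\<exists>A>0. \<forall>f. in_L2 g f \<longrightarrow>
        ((\<lambda>l. (cmod (inner_exp g f l * cnj (w l)))\<^sup>2) has_sum (A * L2_norm_sq g f)) \<Lambda>)"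

definition exp_ONB :: "('a::euclidean_space \<Rightarrow> real) \<Rightarrow> 'a set \<Rightarrow> bool" where
  "exp_ONB g \<Lambda> \<longleftrightarrow>
     (\<forall>l\<in>\<Lambda>. \<forall>l'\<in>\<Lambda>. inner_exp g (exp_fun l) l' = (if l = l' then 1 else 0)) \<and>
     (\<forall>f. in_L2 g f \<longrightarrow> (\<forall>l\<in>\<Lambda>. inner_exp g f l = 0) \<longrightarrow> L2_norm_sq g f = 0)"

end

theory Submission
  imports Defs
begin



definition phase_inv :: "('a::euclidean_space \<Rightarrow> real) \<Rightarrow> bool" where
  "phase_inv g \<longleftrightarrow> (\<forall>f h. in_L2 g f \<longrightarrow> in_L2 g h \<longrightarrow>
     (\<forall>t. cmod (inner_exp g f t) = cmod (inner_exp g h t)) \<longrightarrow> L2_norm_sq g f = L2_norm_sq g h)"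

lemma L2_norm_sq_nonneg: "(\<And>x. g x \<ge> 0) \<Longrightarrow> L2_norm_sq g f \<ge> 0"
  unfolding L2_norm_sq_def by (intro integral_nonneg_AE) auto

lemma tfm_phase_inv:
  assumes "\<And>x. g x \<ge> 0" "tight_frame_measure g \<nu>" shows "phase_inv g"
proof -
  from assms(2) obtain A where A: "A > 0" and H: "\<And>f. in_L2 g f \<Longrightarrow>
        (\<integral>\<^sup>+ t. ennreal ((cmod (inner_exp g f t))\<^sup>2) \<partial>\<nu>) = ennreal (A * L2_norm_sq g f)"
    unfolding tight_frame_measure_def by blast
  show ?thesis unfolding phase_inv_def
  proof (intro allI impI)
    fix f h assume f: "in_L2 g f" and h: "in_L2 g h" and e: "\<forall>t. cmod (inner_exp g f t) = cmod (inner_exp g h t)"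
    have "ennreal (A * L2_norm_sq g f) = ennreal (A * L2_norm_sq g h)"
      using H[OF f] H[OF h] e by simp
    then have "A * L2_norm_sq g f = A * L2_norm_sq g h"
      using A L2_norm_sq_nonneg[of g f, OF assms(1)] L2_norm_sq_nonneg[of g h, OF assms(1)]
      by (subst (asm) ennreal_inj) auto
    then show "L2_norm_sq g f = L2_norm_sq g h" using A by simp
  qed
qed

lemma twf_phase_inv:
  assumes "tight_weighted_exp_frame g \<Lambda> w" shows "phase_inv g"
proof -
  from assms obtain A where A: "A > 0" and H: "\<And>f. in_L2 g f \<Longrightarrow>
        ((\<lambda>l. (cmod (inner_exp g f l * cnj (w l)))\<^sup>2) has_sum (A * L2_norm_sq g f)) \<Lambda>"
    unfolding tight_weighted_exp_frame_def by blast
  show ?thesis unfolding phase_inv_def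
  proof (intro allI impI)
    fix f h assume f: "in_L2 g f" and h: "in_L2 g h" and e: "\<forall>t. cmod (inner_exp g f t) = cmod (inner_exp g h t)"
    have "(\<lambda>l. (cmod (inner_exp g f l * cnj (w l)))\<^sup>2) = (\<lambda>l. (cmod (inner_exp g h l * cnj (w l)))\<^sup>2)"
      using e by (simp add: norm_mult)
    then have "A * L2_norm_sq g f = A * L2_norm_sq g h"
      using H[OF f] H[OF h] has_sum_unique by metis
    then show "L2_norm_sq g f = L2_norm_sq g h" using A by simp
  qed
qed

lemma integral_shift:
  fixes F :: "'a::euclidean_space \<Rightarrow> 'b::{banach, second_countable_topology}"
  assumes "F \<in> borel_measurable borel"
  shows "integral\<^sup>L lborel F = integral\<^sup>L lborel (\<lambda>x. F (c + x))"
proof -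
  have "integral\<^sup>L lborel F = integral\<^sup>L (distr lborel borel ((+) c)) F" by (simp add: lborel_distr_plus)
  also have "\<dots> = integral\<^sup>L lborel (\<lambda>x. F (c + x))"
    by (rule integral_distr) (use assms in auto)
  finally show ?thesis .
qed

lemma integrable_shift:
  fixes F :: "'a::euclidean_space \<Rightarrow> 'b::{banach, second_countable_topology}"
  assumes "F \<in> borel_measurable borel"
  shows "integrable lborel F \<longleftrightarrow> integrable lborel (\<lambda>x. F (c + x))"
proof -
  have "integrable lborel F \<longleftrightarrow> integrable (distr lborel borel ((+) c)) F" by (simp add: lborel_distr_plus)
  also have "\<dots> \<longleftrightarrow> integrable lborel (\<lambda>x. F (c + x))"
    by (rule integrable_distr_eq) (use assms in auto)
  finally show ?thesis .
qed

lemma nn_integral_shift: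
  fixes F :: "'a::euclidean_space \<Rightarrow> ennreal"
  assumes "F \<in> borel_measurable borel"
  shows "integral\<^sup>N lborel F = integral\<^sup>N lborel (\<lambda>x. F (c + x))"
proof -
  have "integral\<^sup>N lborel F = integral\<^sup>N (distr lborel borel ((+) c)) F" by (simp add: lborel_distr_plus)
  also have "\<dots> = integral\<^sup>N lborel (\<lambda>x. F (c + x))"
    by (rule nn_integral_distr) (use assms in auto)
  finally show ?thesis .
qed

lemma exp_fun_add: "exp_fun t (a + y) = exp_fun t a * exp_fun t y"
  unfolding exp_fun_def by (simp add: inner_add_right distrib_left exp_add[symmetric])

lemma cmod_exp_fun: "cmod (exp_fun t x) = 1"
  unfolding exp_fun_def by (simp add: norm_exp_eq_Re)

lemma exp_fun_meas[measurable]: "exp_fun t \<in> borel_measurable borel"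
proof -
  have "continuous_on UNIV (exp_fun t)" unfolding exp_fun_def by (intro continuous_intros)
  then show ?thesis by (rule borel_measurable_continuous_onI)
qed

lemma cnj_exp_fun_meas[measurable]: "(\<lambda>x. cnj (exp_fun t x)) \<in> borel_measurable borel"
proof -
  have "continuous_on UNIV (\<lambda>x. cnj (exp_fun t x))" unfolding exp_fun_def by (intro continuous_intros)
  then show ?thesis by (rule borel_measurable_continuous_onI)
qed

lemma shift_meas:
  fixes F :: "'a::euclidean_space \<Rightarrow> 'b::topological_space"
  assumes "F \<in> borel_measurable borel" shows "(\<lambda>x. F (x - a)) \<in> borel_measurable borel"
proof -
  have "(\<lambda>x::'a. x - a) \<in> borel_measurable borel"
    by (intro borel_measurable_continuous_onI continuous_intros)
  from measurable_compose[OF this assms] show ?thesis by (simp add: o_def)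
qed

lemma core:
  fixes g :: "'a::euclidean_space \<Rightarrow> real"
  assumes gm[measurable]: "g \<in> borel_measurable borel" and gn: "\<And>x. g x \<ge> 0" and gi: "integrable lborel g"
    and pi: "phase_inv g" and n: "n > 0" and Bm[measurable]: "B \<in> sets borel"
    and Bsub: "\<And>y. y \<in> B \<Longrightarrow> g y \<le> n \<and> 1/n \<le> g (a + y)"
  shows "integrable lborel (\<lambda>y. indicator B y * (g y)\<^sup>2 / g (a + y)) \<and>
    (\<integral>y. indicator B y * g y \<partial>lborel) = (\<integral>y. indicator B y * (g y)\<^sup>2 / g (a + y) \<partial>lborel)"
proof -
  define k where "k = (\<lambda>y. indicator B y * (g y)\<^sup>2 / g (a + y))"
  define f where "f = (\<lambda>x. complex_of_real (indicator B x))"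
  define h where "h = (\<lambda>x. complex_of_real (indicator B (x - a) * g (x - a) / g x))"
  have kb: "norm (k y) \<le> norm (n * n * g y)" for y
  proof (cases "y \<in> B")
    case True
    then have b: "g y \<le> n" "1/n \<le> g (a + y)" using Bsub by auto
    have pos: "g (a + y) > 0" using b n by (smt (verit) divide_pos_pos)
    have "1 \<le> n * g (a + y)" using b n by (simp add: divide_le_eq mult.commute)
    then have "g y \<le> n * n * g (a + y)" using b n by (smt (verit) mult_le_cancel_left1 mult.assoc)
    then have "g y * g y \<le> n * n * g y * g (a + y)" using gn[of y]
      by (smt (verit) mult.commute mult.left_commute mult_left_mono)
    then have "(g y)\<^sup>2 / g (a + y) \<le> n * n * g y" using pos by (simp add: divide_le_eq power2_eq_square)
    moreover have "(g y)\<^sup>2 / g (a + y) \<ge> 0" using pos by simp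
    ultimately show ?thesis using True gn[of y] n unfolding k_def by simp
  next
    case False then show ?thesis unfolding k_def by simp
  qed
  have km[measurable]: "k \<in> borel_measurable borel" unfolding k_def by measurable
  have kint: "integrable lborel k"
    by (rule Bochner_Integration.integrable_bound[of lborel "\<lambda>y. n * n * g y"]) (use gi kb in auto)
  have fm[measurable]: "f \<in> borel_measurable borel" unfolding f_def by measurable
  have hm[measurable]: "h \<in> borel_measurable borel" unfolding h_def by measurable
  have f2: "g x * (cmod (f x))\<^sup>2 = indicator B x * g x" for x
    unfolding f_def by (auto simp: indicator_def)
  have h2: "g x * (cmod (h x))\<^sup>2 = k (x - a)" for x
  proof (cases "x - a \<in> B")
    case True
    then have "g x > 0" using Bsub[of "x - a"] n by (simp add: algebra_simps) (smt (verit) divide_pos_pos)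
    have c: "cmod (h x) = g (x - a) / g x" using True \<open>g x > 0\<close> gn[of "x-a"]
      unfolding h_def by (simp add: norm_divide)
    have "g x * (cmod (h x))\<^sup>2 = g x * (g (x - a) / g x)\<^sup>2" by (simp only: c)
    also have "\<dots> = (g (x - a))\<^sup>2 / g x" using \<open>g x > 0\<close> by (simp add: power2_eq_square)
    also have "\<dots> = k (x - a)" using True by (simp add: k_def)
    finally show ?thesis .
  next
    case False then show ?thesis unfolding h_def k_def by simp
  qed
  have gh: "complex_of_real (g x) * h x = complex_of_real (indicator B (x - a) * g (x - a))" for x
  proof (cases "x - a \<in> B")
    case True
    then have "g x > 0" using Bsub[of "x - a"] n by (simp add: algebra_simps) (smt (verit) divide_pos_pos)
    then show ?thesis using True unfolding h_def by simp
  next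
    case False then show ?thesis unfolding h_def by simp
  qed
  have inf: "in_L2 g f" unfolding in_L2_def f2
    using integrable_real_mult_indicator[of B lborel g] gi by (simp add: mult.commute)
  have inh: "in_L2 g h" unfolding in_L2_def h2
    using kint integrable_shift[OF shift_meas[OF km, of a], of a] by auto
  have ip: "cmod (inner_exp g f t) = cmod (inner_exp g h t)" for t
  proof -
    have "inner_exp g h t = (\<integral>x. complex_of_real (indicator B (x - a) * g (x - a)) * cnj (exp_fun t x) \<partial>lborel)"
      unfolding inner_exp_def gh ..
    also have "\<dots> = (\<integral>x. complex_of_real (indicator B x * g x) * cnj (exp_fun t (a + x)) \<partial>lborel)"
    proof (subst integral_shift[of _ a])
      have "(\<lambda>x. indicator B (x - a) * g (x - a)) \<in> borel_measurable borel"
        by (intro shift_meas) measurable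
      then show "(\<lambda>x. complex_of_real (indicator B (x - a) * g (x - a)) * cnj (exp_fun t x)) \<in> borel_measurable borel"
        by measurable
    qed simp
    also have "\<dots> = (\<integral>x. cnj (exp_fun t a) * (complex_of_real (g x) * f x * cnj (exp_fun t x)) \<partial>lborel)"
      unfolding exp_fun_add f_def by (intro Bochner_Integration.integral_cong) (auto simp: indicator_def)
    also have "\<dots> = cnj (exp_fun t a) * inner_exp g f t"
      unfolding inner_exp_def by (rule integral_mult_right_zero)
    finally show ?thesis by (simp add: norm_mult cmod_exp_fun)
  qed
  have "L2_norm_sq g f = L2_norm_sq g h" using pi inf inh ip unfolding phase_inv_def by blast
  moreover have "L2_norm_sq g f = (\<integral>y. indicator B y * g y \<partial>lborel)"
    unfolding L2_norm_sq_def f2 ..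
  moreover have "L2_norm_sq g h = integral\<^sup>L lborel k"
    unfolding L2_norm_sq_def h2 by (subst integral_shift[OF shift_meas[OF km, of a], of a]) simp
  ultimately show ?thesis using kint unfolding k_def by simp
qed

lemma shift_const:
  fixes g :: "'a::euclidean_space \<Rightarrow> real"
  assumes gm[measurable]: "g \<in> borel_measurable borel" and gn: "\<And>x. g x \<ge> 0" and gi: "integrable lborel g"
    and pi: "phase_inv g"
  shows "AE y in lborel. 0 < g y \<and> 0 < g (a + y) \<longrightarrow> g y = g (a + y)"
proof -
  define B1 where "B1 n = {y. g y \<le> real (Suc n) \<and> 1 / real (Suc n) \<le> g (a + y) \<and> 0 < g y \<and> g y < g (a + y)}" for n
  define B2 where "B2 n = {y. g y \<le> real (Suc n) \<and> 1 / real (Suc n) \<le> g (a + y) \<and> 0 < g y \<and> g y > g (a + y)}" for n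
  have gam[measurable]: "(\<lambda>y. g (a + y)) \<in> borel_measurable borel"
    using shift_meas[OF gm, of "-a"] by simp
  have B1m[measurable]: "B1 n \<in> sets borel" for n unfolding B1_def by measurable
  have B2m[measurable]: "B2 n \<in> sets borel" for n unfolding B2_def by measurable
  have gB: "integrable lborel (\<lambda>y. indicator B y * g y)" if "B \<in> sets borel" for B
    using integrable_real_mult_indicator[of B lborel g] gi that by (simp add: mult.commute)
  have A1: "AE y in lborel. y \<notin> B1 n" for n
  proof -
    have c: "integrable lborel (\<lambda>y. indicator (B1 n) y * (g y)\<^sup>2 / g (a + y)) \<and>
      (\<integral>y. indicator (B1 n) y * g y \<partial>lborel) = (\<integral>y. indicator (B1 n) y * (g y)\<^sup>2 / g (a + y) \<partial>lborel)"
      by (rule core[OF gm gn gi pi, of "real (Suc n)"]) (auto simp: B1_def)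
    define \<phi> where "\<phi> y = indicator (B1 n) y * g y - indicator (B1 n) y * (g y)\<^sup>2 / g (a + y)" for y
    have pos: "\<phi> y > 0" if "y \<in> B1 n" for y
    proof -
      from that have "0 < g y" "g y < g (a + y)" by (auto simp: B1_def)
      then have "(g y)\<^sup>2 / g (a + y) < g y" by (simp add: divide_less_eq power2_eq_square)
      then show ?thesis using that by (simp add: \<phi>_def)
    qed
    have nn: "\<phi> y \<ge> 0" for y using pos[of y] by (cases "y \<in> B1 n") (auto simp: \<phi>_def)
    have ii: "integrable lborel \<phi>" unfolding \<phi>_def using c gB[OF B1m] by auto
    have "integral\<^sup>L lborel \<phi> = 0" unfolding \<phi>_def using c gB[OF B1m] by simp
    then have "AE y in lborel. \<phi> y = 0" using integral_nonneg_eq_0_iff_AE[OF ii] nn by auto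
    then show ?thesis by eventually_elim (use pos in force)
  qed
  have A2: "AE y in lborel. y \<notin> B2 n" for n
  proof -
    have c: "integrable lborel (\<lambda>y. indicator (B2 n) y * (g y)\<^sup>2 / g (a + y)) \<and>
      (\<integral>y. indicator (B2 n) y * g y \<partial>lborel) = (\<integral>y. indicator (B2 n) y * (g y)\<^sup>2 / g (a + y) \<partial>lborel)"
      by (rule core[OF gm gn gi pi, of "real (Suc n)"]) (auto simp: B2_def)
    define \<phi> where "\<phi> y = indicator (B2 n) y * (g y)\<^sup>2 / g (a + y) - indicator (B2 n) y * g y" for y
    have pos: "\<phi> y > 0" if "y \<in> B2 n" for y
    proof -
      from that have "1 / real (Suc n) \<le> g (a + y)" "g y > g (a + y)" by (auto simp: B2_def)
      moreover have "1 / real (Suc n) > 0" by simp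
      ultimately have "0 < g (a + y)" "g y > g (a + y)" by linarith+
      then have "(g y)\<^sup>2 / g (a + y) > g y" by (simp add: less_divide_eq power2_eq_square)
      then show ?thesis using that by (simp add: \<phi>_def)
    qed
    have nn: "\<phi> y \<ge> 0" for y using pos[of y] by (cases "y \<in> B2 n") (auto simp: \<phi>_def)
    have ii: "integrable lborel \<phi>" unfolding \<phi>_def using c gB[OF B2m] by auto
    have "integral\<^sup>L lborel \<phi> = 0" unfolding \<phi>_def using c gB[OF B2m] by simp
    then have "AE y in lborel. \<phi> y = 0" using integral_nonneg_eq_0_iff_AE[OF ii] nn by auto
    then show ?thesis by eventually_elim (use pos in force)
  qed
  have "AE y in lborel. \<forall>n. y \<notin> B1 n \<and> y \<notin> B2 n"
    using A1 A2 by (simp add: AE_all_countable)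
  then show ?thesis
  proof eventually_elim
    case (elim y)
    show ?case
    proof (intro impI, rule ccontr)
      assume h: "0 < g y \<and> 0 < g (a + y)" "g y \<noteq> g (a + y)"
      obtain n :: nat where n: "max (g y) (1 / g (a + y)) < real n" using reals_Archimedean2 by blast
      have "g y \<le> real (Suc n)" using n by simp
      moreover have "1 / real (Suc n) \<le> g (a + y)"
      proof -
        have "1 / g (a + y) \<le> real (Suc n)" using n by simp
        then show ?thesis using h by (simp add: divide_le_eq mult.commute)
      qed
      ultimately have "y \<in> B1 n \<or> y \<in> B2 n" using h unfolding B1_def B2_def by auto
      then show False using elim by blast
    qed
  qed
qed

lemma const_on_support:
  fixes g :: "'a::euclidean_space \<Rightarrow> real"
  assumes gm[measurable]: "g \<in> borel_measurable borel" and gn: "\<And>x. g x \<ge> 0"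
    and H: "\<And>a. AE y in lborel. 0 < g y \<and> 0 < g (a + y) \<longrightarrow> g y = g (a + y)"
  shows "\<exists>c E. E \<in> sets lborel \<and> (AE x in lborel. g x = c * indicator E x)"
proof -
  define \<Psi> where "\<Psi> x y = (if 0 < g x \<and> 0 < g y \<and> g x \<noteq> g y then 1 else 0 :: ennreal)" for x y
  have Pm: "case_prod \<Psi> \<in> borel_measurable (lborel \<Otimes>\<^sub>M lborel)"
    unfolding \<Psi>_def by measurable
  have Pm2: "(\<lambda>(x, a). \<Psi> x (x + a)) \<in> borel_measurable (lborel \<Otimes>\<^sub>M lborel)"
    unfolding \<Psi>_def by measurable
  have Pmy[measurable]: "\<Psi> x \<in> borel_measurable borel" for x unfolding \<Psi>_def by measurable
  have s1: "(\<integral>\<^sup>+ y. \<Psi> x y \<partial>lborel) = (\<integral>\<^sup>+ a. \<Psi> x (x + a) \<partial>lborel)" for x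
    by (rule nn_integral_shift) simp
  have s3: "(\<integral>\<^sup>+ x. \<Psi> x (x + a) \<partial>lborel) = 0" for a
  proof -
    have "AE x in lborel. \<Psi> x (x + a) = 0"
      using H[of a] by eventually_elim (auto simp: \<Psi>_def add.commute)
    from nn_integral_cong_AE[OF this] show ?thesis by simp
  qed
  have "(\<integral>\<^sup>+ x. (\<integral>\<^sup>+ y. \<Psi> x y \<partial>lborel) \<partial>lborel) = (\<integral>\<^sup>+ x. (\<integral>\<^sup>+ a. \<Psi> x (x + a) \<partial>lborel) \<partial>lborel)"
    by (simp add: s1)
  also have "\<dots> = (\<integral>\<^sup>+ a. (\<integral>\<^sup>+ x. \<Psi> x (x + a) \<partial>lborel) \<partial>lborel)"
    using lborel_pair.Fubini'[of "\<lambda>x a. \<Psi> x (x + a)"] Pm2 by simp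
  also have "\<dots> = 0" by (simp add: s3)
  finally have "AE x in lborel. (\<integral>\<^sup>+ y. \<Psi> x y \<partial>lborel) = 0"
    by (subst (asm) nn_integral_0_iff_AE) (use lborel.borel_measurable_nn_integral[OF Pm] in auto)
  then have AEx: "AE x in lborel. AE y in lborel. \<Psi> x y = 0"
    by eventually_elim (simp add: nn_integral_0_iff_AE)
  show ?thesis
  proof (cases "AE x in lborel. \<not> 0 < g x")
    case True
    then have "AE x in lborel. g x = 0 * indicator {} x" by eventually_elim (use gn in \<open>force simp: order.order_iff_strict\<close>)
    then show ?thesis by blast
  next
    case False
    have "\<exists>x. (AE y in lborel. \<Psi> x y = 0) \<and> 0 < g x"
    proof (rule ccontr)
      assume nt: "\<not> ?thesis"
      have "AE x in lborel. \<not> 0 < g x" using AEx by (rule eventually_mono) (use nt in blast)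
      then show False using False by blast
    qed
    then obtain x0 where x0: "AE y in lborel. \<Psi> x0 y = 0" "0 < g x0" by blast
    have "AE y in lborel. g y = g x0 * indicator {y. 0 < g y} y"
      using x0(1) by eventually_elim (use x0(2) gn in \<open>auto simp: \<Psi>_def indicator_def order.order_iff_strict split: if_splits\<close>)
    moreover have "{y. 0 < g y} \<in> sets lborel" by measurable
    ultimately show ?thesis by blast
  qed
qed




lemma cmod_add_sq: "(cmod (a + b))\<^sup>2 \<le> 2 * (cmod a)\<^sup>2 + 2 * (cmod b)\<^sup>2"
proof -
  have "cmod (a + b) \<le> cmod a + cmod b" by (rule norm_triangle_ineq)
  then have "(cmod (a + b))\<^sup>2 \<le> (cmod a + cmod b)\<^sup>2" by (simp add: power_mono)
  also have "\<dots> \<le> 2 * (cmod a)\<^sup>2 + 2 * (cmod b)\<^sup>2"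
  proof -
    have "0 \<le> (cmod a - cmod b)\<^sup>2" by simp
    then show ?thesis unfolding power2_sum power2_diff by linarith
  qed
  finally show ?thesis .
qed

lemma cmod_mult_le: "cmod a * cmod b \<le> (cmod a)\<^sup>2 + (cmod b)\<^sup>2"
proof -
  have "0 \<le> (cmod a - cmod b)\<^sup>2" by simp
  moreover have "0 \<le> cmod a * cmod b" by simp
  ultimately show ?thesis unfolding power2_diff by linarith
qed

lemma cnj_meas[measurable]:
  assumes "v \<in> borel_measurable M" shows "(\<lambda>x. cnj (v x)) \<in> borel_measurable M"
proof -
  have "(cnj :: complex \<Rightarrow> complex) \<in> borel_measurable borel"
    by (intro borel_measurable_continuous_onI continuous_intros)
  from measurable_compose[OF assms this] show ?thesis by (simp add: o_def)
qed

locale wt =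
  fixes g :: "'a::euclidean_space \<Rightarrow> real"
  assumes gm[measurable]: "g \<in> borel_measurable borel" and gn: "\<And>x. g x \<ge> 0"
    and gi: "integrable lborel g"
begin

definition ip :: "('a \<Rightarrow> complex) \<Rightarrow> ('a \<Rightarrow> complex) \<Rightarrow> complex" where
  "ip u v = (\<integral>x. complex_of_real (g x) * u x * cnj (v x) \<partial>lborel)"

lemma inner_exp_ip: "inner_exp g f t = ip f (exp_fun t)"
  unfolding inner_exp_def ip_def ..

lemma L2_meas: "in_L2 g u \<Longrightarrow> u \<in> borel_measurable borel" unfolding in_L2_def by simp

lemma L2_add:
  assumes "in_L2 g u" "in_L2 g v" shows "in_L2 g (\<lambda>x. u x + v x)"
proof -
  have [measurable]: "u \<in> borel_measurable borel" "v \<in> borel_measurable borel" using assms L2_meas by auto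
  have "integrable lborel (\<lambda>x. 2 * (g x * (cmod (u x))\<^sup>2) + 2 * (g x * (cmod (v x))\<^sup>2))"
    using assms unfolding in_L2_def by auto
  then have "integrable lborel (\<lambda>x. g x * (cmod (u x + v x))\<^sup>2)"
  proof (rule Bochner_Integration.integrable_bound)
    show "AE x in lborel. norm (g x * (cmod (u x + v x))\<^sup>2) \<le> norm (2 * (g x * (cmod (u x))\<^sup>2) + 2 * (g x * (cmod (v x))\<^sup>2))"
    proof (intro AE_I2)
      fix x
      have "g x * (cmod (u x + v x))\<^sup>2 \<le> g x * (2 * (cmod (u x))\<^sup>2 + 2 * (cmod (v x))\<^sup>2)"
        using cmod_add_sq gn by (intro mult_left_mono) auto
      then show "norm (g x * (cmod (u x + v x))\<^sup>2) \<le> norm (2 * (g x * (cmod (u x))\<^sup>2) + 2 * (g x * (cmod (v x))\<^sup>2))"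
        using gn[of x] by (simp add: algebra_simps)
    qed
  qed measurable
  then show ?thesis unfolding in_L2_def by (intro conjI) measurable
qed

lemma L2_scale:
  assumes "in_L2 g u" shows "in_L2 g (\<lambda>x. c * u x)"
proof -
  have [measurable]: "u \<in> borel_measurable borel" using assms L2_meas by auto
  have "integrable lborel (\<lambda>x. (cmod c)\<^sup>2 * (g x * (cmod (u x))\<^sup>2))"
    using assms unfolding in_L2_def by auto
  then have "integrable lborel (\<lambda>x. g x * (cmod (c * u x))\<^sup>2)"
    by (simp add: norm_mult power_mult_distrib mult_ac)
  then show ?thesis unfolding in_L2_def by (intro conjI) measurable
qed

lemma L2_diff:
  assumes "in_L2 g u" "in_L2 g v" shows "in_L2 g (\<lambda>x. u x - v x)"
  using L2_add[OF assms(1) L2_scale[OF assms(2), of "-1"]] by simp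

lemma L2_exp: "in_L2 g (exp_fun l)"
  unfolding in_L2_def using gi by (simp add: cmod_exp_fun)

lemma L2_zero: "in_L2 g (\<lambda>x. 0)"
  unfolding in_L2_def by simp

lemma L2_sum:
  assumes "\<And>l. l \<in> S \<Longrightarrow> in_L2 g (E l)" shows "in_L2 g (\<lambda>x. \<Sum>l\<in>S. a l * E l x)"
  using assms
proof (induction S rule: infinite_finite_induct)
  case (infinite A) then show ?case using L2_zero by simp
next
  case empty then show ?case using L2_zero by simp
next
  case (insert l F)
  then show ?case using L2_add[OF L2_scale[of "E l" "a l"]] by simp
qed

lemma ip_integrable:
  assumes "in_L2 g u" "in_L2 g v"
  shows "integrable lborel (\<lambda>x. complex_of_real (g x) * u x * cnj (v x))"
proof -
  have [measurable]: "u \<in> borel_measurable borel" "v \<in> borel_measurable borel" using assms L2_meas by auto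
  have "integrable lborel (\<lambda>x. g x * (cmod (u x))\<^sup>2 + g x * (cmod (v x))\<^sup>2)"
    using assms unfolding in_L2_def by auto
  then show ?thesis
  proof (rule Bochner_Integration.integrable_bound)
    show "AE x in lborel. norm (complex_of_real (g x) * u x * cnj (v x)) \<le> norm (g x * (cmod (u x))\<^sup>2 + g x * (cmod (v x))\<^sup>2)"
    proof (intro AE_I2)
      fix x
      have "g x * (cmod (u x) * cmod (v x)) \<le> g x * ((cmod (u x))\<^sup>2 + (cmod (v x))\<^sup>2)"
        using cmod_mult_le gn by (intro mult_left_mono) auto
      then show "norm (complex_of_real (g x) * u x * cnj (v x)) \<le> norm (g x * (cmod (u x))\<^sup>2 + g x * (cmod (v x))\<^sup>2)"
        using gn[of x] by (simp add: norm_mult algebra_simps)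
    qed
  qed measurable
qed

lemma ip_add_left:
  assumes "in_L2 g u" "in_L2 g v" "in_L2 g w"
  shows "ip (\<lambda>x. u x + v x) w = ip u w + ip v w"
  unfolding ip_def using ip_integrable[OF assms(1,3)] ip_integrable[OF assms(2,3)]
  by (simp add: distrib_left distrib_right)

lemma ip_scale_left: "ip (\<lambda>x. c * u x) w = c * ip u w"
  unfolding ip_def by (simp add: mult_ac)

lemma ip_diff_left:
  assumes "in_L2 g u" "in_L2 g v" "in_L2 g w"
  shows "ip (\<lambda>x. u x - v x) w = ip u w - ip v w"
  using ip_add_left[OF assms(1) L2_scale[OF assms(2), of "-1"] assms(3)] ip_scale_left[of "-1" v w]
  by simp

lemma ip_cnj: "ip v u = cnj (ip u v)"
  unfolding ip_def by (subst Bochner_Integration.integral_cnj[symmetric]) (simp add: mult_ac)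

lemma ip_diff_right:
  assumes "in_L2 g u" "in_L2 g v" "in_L2 g w"
  shows "ip w (\<lambda>x. u x - v x) = ip w u - ip w v"
  using ip_diff_left[OF assms] by (metis ip_cnj complex_cnj_diff)

lemma ip_sum_left:
  assumes "\<And>l. l \<in> S \<Longrightarrow> in_L2 g (E l)" "in_L2 g w"
  shows "ip (\<lambda>x. \<Sum>l\<in>S. a l * E l x) w = (\<Sum>l\<in>S. a l * ip (E l) w)"
  using assms
proof (induction S rule: infinite_finite_induct)
  case (infinite A) then show ?case by (simp add: ip_def)
next
  case empty then show ?case by (simp add: ip_def)
next
  case (insert l F)
  have "ip (\<lambda>x. \<Sum>l\<in>insert l F. a l * E l x) w = ip (\<lambda>x. a l * E l x + (\<Sum>l\<in>F. a l * E l x)) w"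
    using insert by simp
  also have "\<dots> = ip (\<lambda>x. a l * E l x) w + ip (\<lambda>x. \<Sum>l\<in>F. a l * E l x) w"
    by (rule ip_add_left) (use insert.prems L2_scale L2_sum[of F E a] in auto)
  finally show ?case using insert by (simp add: ip_scale_left)
qed

lemma ip_sum_right:
  assumes "\<And>l. l \<in> S \<Longrightarrow> in_L2 g (E l)" "in_L2 g w"
  shows "ip w (\<lambda>x. \<Sum>l\<in>S. a l * E l x) = (\<Sum>l\<in>S. cnj (a l) * ip w (E l))"
proof -
  have "ip w (\<lambda>x. \<Sum>l\<in>S. a l * E l x) = cnj (ip (\<lambda>x. \<Sum>l\<in>S. a l * E l x) w)" by (rule ip_cnj)
  also have "\<dots> = (\<Sum>l\<in>S. cnj (a l) * cnj (ip (E l) w))" using ip_sum_left[of S E w a, OF assms] by simp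
  also have "\<dots> = (\<Sum>l\<in>S. cnj (a l) * ip w (E l))" by (simp add: ip_cnj[of w])
  finally show ?thesis .
qed

lemma norm_ip: "complex_of_real (L2_norm_sq g u) = ip u u"
proof -
  have "complex_of_real (g x * (cmod (u x))\<^sup>2) = complex_of_real (g x) * u x * cnj (u x)" for x
    by (simp only: of_real_mult complex_norm_square mult.assoc)
  then have e: "(\<lambda>x. complex_of_real (g x * (cmod (u x))\<^sup>2)) = (\<lambda>x. complex_of_real (g x) * u x * cnj (u x))"
    by (rule ext)
  have "complex_of_real (L2_norm_sq g u) = (\<integral>x. complex_of_real (g x * (cmod (u x))\<^sup>2) \<partial>lborel)"
    unfolding L2_norm_sq_def by (rule integral_complex_of_real[symmetric])
  also have "\<dots> = ip u u" unfolding ip_def e ..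
  finally show ?thesis .
qed

lemma norm_diff_expand:
  assumes "in_L2 g u" "in_L2 g v"
  shows "L2_norm_sq g (\<lambda>x. u x - v x) = L2_norm_sq g u - 2 * Re (ip u v) + L2_norm_sq g v"
proof -
  have d: "in_L2 g (\<lambda>x. u x - v x)" using L2_diff assms by auto
  have "complex_of_real (L2_norm_sq g (\<lambda>x. u x - v x)) = ip u u - ip v u - (ip u v - ip v v)"
    unfolding norm_ip by (simp add: ip_diff_left[OF assms d] ip_diff_right[OF assms] assms)
  also have "\<dots> = complex_of_real (L2_norm_sq g u) - (ip u v + cnj (ip u v)) + complex_of_real (L2_norm_sq g v)"
    by (simp add: norm_ip ip_cnj[of v u])
  also have "ip u v + cnj (ip u v) = complex_of_real (2 * Re (ip u v))"
    by (simp add: complex_add_cnj)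
  finally show ?thesis by (metis Re_complex_of_real minus_complex.simps(1) plus_complex.simps(1))
qed

end



context wt begin

definition P :: "'a set \<Rightarrow> ('a \<Rightarrow> complex) \<Rightarrow> 'a \<Rightarrow> complex" where
  "P S a = (\<lambda>x. \<Sum>l\<in>S. a l * exp_fun l x)"

lemma L2_P: "in_L2 g (P S a)"
  unfolding P_def by (rule L2_sum) (rule L2_exp)

lemma P_diff:
  assumes "finite T" "S \<subseteq> T" shows "(\<lambda>x. P T a x - P S a x) = P (T - S) a"
  unfolding P_def using assms by (auto simp: sum_diff finite_subset)

end

locale orth = wt +
  fixes \<Lambda> :: "'a set"
  assumes on: "\<And>l l'. l \<in> \<Lambda> \<Longrightarrow> l' \<in> \<Lambda> \<Longrightarrow> ip (exp_fun l) (exp_fun l') = (if l = l' then 1 else 0)"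
begin

lemma ip_P_e:
  assumes "finite S" "S \<subseteq> \<Lambda>" "m \<in> \<Lambda>"
  shows "ip (P S a) (exp_fun m) = (if m \<in> S then a m else 0)"
proof -
  have "ip (P S a) (exp_fun m) = (\<Sum>l\<in>S. a l * ip (exp_fun l) (exp_fun m))"
    unfolding P_def by (rule ip_sum_left) (use L2_exp in auto)
  also have "\<dots> = (\<Sum>l\<in>S. if l = m then a l else 0)"
    by (rule sum.cong) (use assms on in auto)
  also have "\<dots> = (if m \<in> S then a m else 0)" using assms(1) by (simp add: sum.delta')
  finally show ?thesis .
qed

lemma norm_P:
  assumes "finite S" "S \<subseteq> \<Lambda>"
  shows "L2_norm_sq g (P S a) = (\<Sum>l\<in>S. (cmod (a l))\<^sup>2)"
proof -
  have "complex_of_real (L2_norm_sq g (P S a)) = ip (P S a) (P S a)" by (rule norm_ip)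
  also have "\<dots> = (\<Sum>m\<in>S. cnj (a m) * ip (P S a) (exp_fun m))"
    by (subst (2) P_def, rule ip_sum_right) (use L2_exp L2_P in auto)
  also have "\<dots> = (\<Sum>m\<in>S. complex_of_real ((cmod (a m))\<^sup>2))"
  proof (rule sum.cong)
    fix m assume "m \<in> S"
    then have "cnj (a m) * ip (P S a) (exp_fun m) = a m * cnj (a m)" using assms ip_P_e[OF assms, of m a] \<open>m \<in> S\<close> by auto
    then show "cnj (a m) * ip (P S a) (exp_fun m) = complex_of_real ((cmod (a m))\<^sup>2)"
      by (metis complex_norm_square)
  qed simp
  finally show ?thesis by (metis of_real_eq_iff of_real_sum)
qed

lemma bessel_eq:
  assumes "finite S" "S \<subseteq> \<Lambda>" "in_L2 g f"
  defines "c \<equiv> \<lambda>l. ip f (exp_fun l)"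
  shows "L2_norm_sq g (\<lambda>x. f x - P S c x) = L2_norm_sq g f - (\<Sum>l\<in>S. (cmod (c l))\<^sup>2)"
proof -
  have "ip f (P S c) = (\<Sum>l\<in>S. cnj (c l) * ip f (exp_fun l))"
    unfolding P_def by (rule ip_sum_right) (use L2_exp assms in auto)
  also have "\<dots> = (\<Sum>l\<in>S. complex_of_real ((cmod (c l))\<^sup>2))"
  proof (rule sum.cong)
    fix m
    show "cnj (c m) * ip f (exp_fun m) = complex_of_real ((cmod (c m))\<^sup>2)"
      unfolding c_def by (metis complex_norm_square mult.commute)
  qed simp
  finally have "Re (ip f (P S c)) = (\<Sum>l\<in>S. (cmod (c l))\<^sup>2)"
    by (metis Re_complex_of_real of_real_sum)
  then show ?thesis using norm_diff_expand[OF assms(3) L2_P, of S c] norm_P[OF assms(1,2), of c] by simp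
qed

lemma bessel:
  assumes "finite S" "S \<subseteq> \<Lambda>" "in_L2 g f"
  shows "(\<Sum>l\<in>S. (cmod (ip f (exp_fun l)))\<^sup>2) \<le> L2_norm_sq g f"
  using bessel_eq[OF assms] L2_norm_sq_nonneg[of g "\<lambda>x. f x - P S (\<lambda>l. ip f (exp_fun l)) x"] gn
  by simp

end



lemma am_gm_eps:
  fixes t e :: real assumes "e > 0" "t \<ge> 0"
  shows "t \<le> e / 2 + t\<^sup>2 / (2 * e)"
proof -
  have "0 \<le> (t - e)\<^sup>2" by simp
  then have "2 * e * t \<le> t\<^sup>2 + e\<^sup>2" unfolding power2_diff by (simp add: algebra_simps)
  then have "t \<le> (t\<^sup>2 + e\<^sup>2) / (2 * e)" using assms by (simp add: le_divide_eq mult.commute)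
  also have "\<dots> = e / 2 + t\<^sup>2 / (2 * e)" using assms by (simp add: field_simps power2_eq_square)
  finally show ?thesis .
qed

context wt begin

lemma L2_one: "in_L2 g (\<lambda>x. 1)"
  unfolding in_L2_def using gi by simp

lemma L1_integrable:
  assumes "in_L2 g v" shows "integrable lborel (\<lambda>x. g x * cmod (v x))"
proof -
  have "integrable lborel (\<lambda>x. norm (complex_of_real (g x) * v x * cnj 1))"
    using ip_integrable[OF assms L2_one] by (rule integrable_norm)
  then show ?thesis using gn by (simp add: norm_mult)
qed

lemma L1_small:
  assumes "in_L2 g v" "e > 0" "L2_norm_sq g v \<le> e\<^sup>2"
  shows "(\<integral>x. g x * cmod (v x) \<partial>lborel) \<le> e * (integral\<^sup>L lborel g + 1) / 2"
proof -
  have i2: "integrable lborel (\<lambda>x. g x * (cmod (v x))\<^sup>2)" using assms unfolding in_L2_def by simp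
  have "(\<integral>x. g x * cmod (v x) \<partial>lborel) \<le> (\<integral>x. e / 2 * g x + (g x * (cmod (v x))\<^sup>2) / (2 * e) \<partial>lborel)"
  proof (rule integral_mono)
    show "integrable lborel (\<lambda>x. g x * cmod (v x))" by (rule L1_integrable[OF assms(1)])
    show "integrable lborel (\<lambda>x. e / 2 * g x + g x * (cmod (v x))\<^sup>2 / (2 * e))" using gi i2 by auto
    fix x
    have "g x * cmod (v x) \<le> g x * (e / 2 + (cmod (v x))\<^sup>2 / (2 * e))"
      using am_gm_eps[OF assms(2), of "cmod (v x)"] gn by (intro mult_left_mono) auto
    then show "g x * cmod (v x) \<le> e / 2 * g x + g x * (cmod (v x))\<^sup>2 / (2 * e)"
      by (simp add: algebra_simps)
  qed
  also have "\<dots> = e / 2 * integral\<^sup>L lborel g + L2_norm_sq g v / (2 * e)"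
    unfolding L2_norm_sq_def using gi i2 by simp
  also have "\<dots> \<le> e / 2 * integral\<^sup>L lborel g + e / 2"
    using assms(2,3) by (simp add: divide_le_eq power2_eq_square)
  finally show ?thesis by (simp add: field_simps)
qed

lemma ip_bound:
  assumes "in_L2 g v" shows "cmod (ip v (exp_fun l)) \<le> (\<integral>x. g x * cmod (v x) \<partial>lborel)"
proof -
  have "cmod (ip v (exp_fun l)) \<le> (\<integral>x. norm (complex_of_real (g x) * v x * cnj (exp_fun l x)) \<partial>lborel)"
    unfolding ip_def by (rule integral_norm_bound)
  also have "\<dots> = (\<integral>x. g x * cmod (v x) \<partial>lborel)"
    using gn by (simp add: norm_mult cmod_exp_fun)
  finally show ?thesis .
qed

lemma L2_of_nn:
  assumes vm[measurable]: "v \<in> borel_measurable borel" and w: "in_L2 g w"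
    and fin: "(\<integral>\<^sup>+x. ennreal (g x * (cmod (v x - w x))\<^sup>2) \<partial>lborel) < \<infinity>"
  shows "in_L2 g v"
proof -
  have wm[measurable]: "w \<in> borel_measurable borel" using w L2_meas by auto
  have wi: "integrable lborel (\<lambda>x. g x * (cmod (w x))\<^sup>2)" using w unfolding in_L2_def by simp
  have "(\<integral>\<^sup>+x. ennreal (norm (g x * (cmod (v x))\<^sup>2)) \<partial>lborel)
     \<le> (\<integral>\<^sup>+x. 2 * ennreal (g x * (cmod (v x - w x))\<^sup>2) + 2 * ennreal (g x * (cmod (w x))\<^sup>2) \<partial>lborel)"
  proof (rule nn_integral_mono)
    fix x
    have "g x * (cmod (v x))\<^sup>2 \<le> g x * (2 * (cmod (v x - w x))\<^sup>2 + 2 * (cmod (w x))\<^sup>2)"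
      using cmod_add_sq[of "v x - w x" "w x"] gn by (intro mult_left_mono) auto
    then have "g x * (cmod (v x))\<^sup>2 \<le> 2 * (g x * (cmod (v x - w x))\<^sup>2) + 2 * (g x * (cmod (w x))\<^sup>2)"
      by (simp add: algebra_simps)
    moreover have a: "0 \<le> g x * (cmod (v x - w x))\<^sup>2" "0 \<le> g x * (cmod (w x))\<^sup>2" using gn[of x] by auto
    ultimately have "ennreal (norm (g x * (cmod (v x))\<^sup>2)) \<le> ennreal (2 * (g x * (cmod (v x - w x))\<^sup>2) + 2 * (g x * (cmod (w x))\<^sup>2))"
      using gn[of x] by (intro ennreal_leI) simp
    also have "\<dots> = 2 * ennreal (g x * (cmod (v x - w x))\<^sup>2) + 2 * ennreal (g x * (cmod (w x))\<^sup>2)"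
      using a by (simp add: ennreal_plus ennreal_mult)
    finally show "ennreal (norm (g x * (cmod (v x))\<^sup>2)) \<le> 2 * ennreal (g x * (cmod (v x - w x))\<^sup>2) + 2 * ennreal (g x * (cmod (w x))\<^sup>2)" .
  qed
  also have "\<dots> = 2 * (\<integral>\<^sup>+x. ennreal (g x * (cmod (v x - w x))\<^sup>2) \<partial>lborel) + 2 * (\<integral>\<^sup>+x. ennreal (g x * (cmod (w x))\<^sup>2) \<partial>lborel)"
    by (simp add: nn_integral_add nn_integral_cmult)
  also have "\<dots> < \<infinity>"
    using fin nn_integral_eq_integral[OF wi] gn by (simp add: ennreal_mult_less_top)
  finally have "integrable lborel (\<lambda>x. g x * (cmod (v x))\<^sup>2)"
    by (intro integrableI_bounded) auto
  then show ?thesis unfolding in_L2_def by simp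
qed

end




locale onb = orth +
  assumes complete: "\<And>f. in_L2 g f \<Longrightarrow> (\<forall>l\<in>\<Lambda>. ip f (exp_fun l) = 0) \<Longrightarrow> L2_norm_sq g f = 0"
begin

lemma half_pow_sq: "((1/2::real) ^ i)\<^sup>2 = (1/4) ^ i"
  by (simp add: power2_eq_square power_mult_distrib[symmetric])

lemma parseval_approx:
  assumes f: "in_L2 g f" and eps: "\<epsilon> > 0"
  shows "\<exists>S. finite S \<and> S \<subseteq> \<Lambda> \<and> L2_norm_sq g f - \<epsilon> < (\<Sum>l\<in>S. (cmod (ip f (exp_fun l)))\<^sup>2)"
proof -
  define c where "c = (\<lambda>l. ip f (exp_fun l))"
  define q where "q S = (\<Sum>l\<in>S. (cmod (c l))\<^sup>2)" for S
  define Q where "Q = q ` {S. finite S \<and> S \<subseteq> \<Lambda>}"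
  define \<sigma> where "\<sigma> = Sup Q"
  define G where "G = integral\<^sup>L lborel g"
  have G0: "G \<ge> 0" unfolding G_def using gn by (simp add: integral_nonneg_AE)
  have qmono: "q S \<le> q T" if "S \<subseteq> T" "finite T" for S T
    unfolding q_def by (rule sum_mono2) (use that in auto)
  have bdd: "bdd_above Q"
    unfolding Q_def q_def c_def using bessel[OF _ _ f] by (auto intro!: bdd_aboveI)
  have Qne: "Q \<noteq> {}" unfolding Q_def by auto
  have qle: "q S \<le> \<sigma>" if "finite S" "S \<subseteq> \<Lambda>" for S
    unfolding \<sigma>_def using that bdd by (auto intro!: cSup_upper simp: Q_def)
  have "\<exists>T. finite T \<and> T \<subseteq> \<Lambda> \<and> \<sigma> - (1/4)^j < q T" for j :: nat
  proof -
    have "\<sigma> - (1/4)^j < Sup Q" unfolding \<sigma>_def by simp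
    then obtain y where "y \<in> Q" "\<sigma> - (1/4)^j < y" using less_cSup_iff[OF Qne bdd] by blast
    then show ?thesis unfolding Q_def by auto
  qed
  then obtain T where T: "\<And>j. finite (T j) \<and> T j \<subseteq> \<Lambda> \<and> \<sigma> - (1/4)^j < q (T j)" by metis
  define S where "S j = (\<Union>i\<in>{..j}. T i)" for j
  have Sfin: "finite (S j)" for j unfolding S_def using T by auto
  have Ssub: "S j \<subseteq> \<Lambda>" for j unfolding S_def using T by auto
  have Smono: "S i \<subseteq> S j" if "i \<le> j" for i j unfolding S_def using that by (auto intro: order_trans)
  have Sq: "\<sigma> - (1/4)^j < q (S j)" for j
  proof -
    have "T j \<subseteq> S j" unfolding S_def by auto
    then have "q (T j) \<le> q (S j)" using qmono Sfin by blast
    then show ?thesis using T[of j] by simp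
  qed
  define U where "U j = P (S j) c" for j
  have UL2: "in_L2 g (U j)" for j unfolding U_def by (rule L2_P)
  have Um[measurable]: "U j \<in> borel_measurable borel" for j using UL2 L2_meas by auto
  have Ud: "L2_norm_sq g (\<lambda>x. U k x - U i x) \<le> (1/4)^i" if "i \<le> k" for i k
  proof -
    have "(\<lambda>x. U k x - U i x) = P (S k - S i) c" unfolding U_def by (rule P_diff) (use Sfin Smono that in auto)
    then have "L2_norm_sq g (\<lambda>x. U k x - U i x) = q (S k - S i)"
      using norm_P[of "S k - S i" c] Sfin Ssub unfolding q_def by auto
    also have "\<dots> = q (S k) - q (S i)" unfolding q_def by (rule sum_diff) (use Sfin Smono that in auto)
    also have "\<dots> \<le> (1/4)^i" using Sq[of i] qle[OF Sfin Ssub, of k] by simp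
    finally show ?thesis .
  qed
  have Ud': "L2_norm_sq g (\<lambda>x. U j x - U k x) \<le> (1/4)^i" if "i \<le> j" "i \<le> k" for i j k
  proof (cases "j \<le> k")
    case True
    have "L2_norm_sq g (\<lambda>x. U j x - U k x) = L2_norm_sq g (\<lambda>x. U k x - U j x)"
      unfolding L2_norm_sq_def by (simp add: norm_minus_commute)
    also have "\<dots> \<le> (1/4)^j" using Ud True by simp
    also have "\<dots> \<le> (1/4)^i" using that by (intro power_decreasing) auto
    finally show ?thesis .
  next
    case False
    have "L2_norm_sq g (\<lambda>x. U j x - U k x) \<le> (1/4)^k" using Ud False by simp
    also have "\<dots> \<le> (1/4)^i" using that by (intro power_decreasing) auto
    finally show ?thesis .
  qed
  have L1d: "(\<integral>x. g x * cmod (U j x - U k x) \<partial>lborel) \<le> (1/2)^i * (G + 1) / 2" if "i \<le> j" "i \<le> k" for i j k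
    unfolding G_def by (rule L1_small) (use L2_diff[OF UL2 UL2] Ud'[OF that] half_pow_sq in auto)
  define M where "M = density lborel (\<lambda>x. ennreal (g x))"
  have intM: "integrable M (U n)" for n
  proof -
    have "integrable lborel (\<lambda>x. complex_of_real (g x) * U n x * cnj 1)"
      by (rule ip_integrable[OF UL2 L2_one])
    then have "integrable lborel (\<lambda>x. g x *\<^sub>R U n x)" by (simp add: scaleR_conv_of_real)
    then show ?thesis unfolding M_def using gn by (subst integrable_density) auto
  qed
  have LM: "(LINT x|M. norm (U i x - U j x)) = (\<integral>x. g x * cmod (U i x - U j x) \<partial>lborel)" for i j
    unfolding M_def using gn by (subst integral_density) auto
  have "\<exists>N. \<forall>i\<ge>N. \<forall>j\<ge>N. (LINT x|M. norm (U i x - U j x)) < e" if e: "e > 0" for e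
  proof -
    obtain N where N: "(1/2::real)^N < 2 * e / (G + 1)"
      using real_arch_pow_inv[of "2 * e / (G + 1)" "1/2"] e G0 by auto
    then have "(1/2::real)^N * (G + 1) / 2 < e" using G0 by (simp add: less_divide_eq field_simps)
    then show ?thesis unfolding LM using L1d by (meson le_less_trans)
  qed
  from cauchy_L1_AE_cauchy_subseq[OF intM this]
  obtain r where r: "strict_mono r" and AEM: "AE x in M. Cauchy (\<lambda>i. U (r i) x)" by metis
  have AEc: "AE x in lborel. 0 < g x \<longrightarrow> Cauchy (\<lambda>i. U (r i) x)"
    using AEM unfolding M_def by (subst (asm) AE_density) auto
  define u where "u x = lim (\<lambda>i. U (r i) x)" for x
  have um[measurable]: "u \<in> borel_measurable borel" unfolding u_def by measurable
  have conv: "AE x in lborel. 0 < g x \<longrightarrow> (\<lambda>i. U (r i) x) \<longlonglongrightarrow> u x"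
    using AEc by eventually_elim (auto simp: u_def Cauchy_convergent_iff convergent_LIMSEQ_iff)
  have rge: "i \<le> r i" for i using r by (rule seq_suble)
  have fatou: "(\<integral>\<^sup>+x. ennreal (g x * (cmod (U (r i) x - u x))\<^sup>2) \<partial>lborel) \<le> ennreal ((1/4)^i)" for i
  proof -
    have "AE x in lborel. ennreal (g x * (cmod (U (r i) x - u x))\<^sup>2)
        = liminf (\<lambda>j. ennreal (g x * (cmod (U (r i) x - U (r j) x))\<^sup>2))"
      using conv
    proof eventually_elim
      case (elim x)
      show ?case
      proof (cases "0 < g x")
        case True
        then have "(\<lambda>j. U (r j) x) \<longlonglongrightarrow> u x" using elim by simp
        then have "(\<lambda>j. ennreal (g x * (cmod (U (r i) x - U (r j) x))\<^sup>2)) \<longlonglongrightarrow> ennreal (g x * (cmod (U (r i) x - u x))\<^sup>2)"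
          by (intro tendsto_ennrealI tendsto_intros)
        then show ?thesis by (simp add: lim_imp_Liminf)
      next
        case False
        then have "g x = 0" using gn[of x] by simp
        then show ?thesis by (simp add: Liminf_const)
      qed
    qed
    then have "(\<integral>\<^sup>+x. ennreal (g x * (cmod (U (r i) x - u x))\<^sup>2) \<partial>lborel)
        = (\<integral>\<^sup>+x. liminf (\<lambda>j. ennreal (g x * (cmod (U (r i) x - U (r j) x))\<^sup>2)) \<partial>lborel)"
      by (rule nn_integral_cong_AE)
    also have "\<dots> \<le> liminf (\<lambda>j. \<integral>\<^sup>+x. ennreal (g x * (cmod (U (r i) x - U (r j) x))\<^sup>2) \<partial>lborel)"
      by (rule nn_integral_liminf) measurable
    also have "\<dots> \<le> ennreal ((1/4)^i)"
    proof (rule Liminf_le)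
      show "\<forall>\<^sub>F j in sequentially. (\<integral>\<^sup>+x. ennreal (g x * (cmod (U (r i) x - U (r j) x))\<^sup>2) \<partial>lborel) \<le> ennreal ((1/4)^i)"
        unfolding eventually_sequentially
      proof (intro exI allI impI)
        fix j assume "i \<le> j"
        have "in_L2 g (\<lambda>x. U (r i) x - U (r j) x)" by (rule L2_diff[OF UL2 UL2])
        then have "integrable lborel (\<lambda>x. g x * (cmod (U (r i) x - U (r j) x))\<^sup>2)" unfolding in_L2_def by simp
        then have "(\<integral>\<^sup>+x. ennreal (g x * (cmod (U (r i) x - U (r j) x))\<^sup>2) \<partial>lborel) = ennreal (L2_norm_sq g (\<lambda>x. U (r i) x - U (r j) x))"
          unfolding L2_norm_sq_def using gn by (subst nn_integral_eq_integral) auto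
        also have "\<dots> \<le> ennreal ((1/4)^i)"
          using Ud'[of i "r i" "r j"] rge[of i] rge[of j] \<open>i \<le> j\<close> by (intro ennreal_leI) auto
        finally show "(\<integral>\<^sup>+x. ennreal (g x * (cmod (U (r i) x - U (r j) x))\<^sup>2) \<partial>lborel) \<le> ennreal ((1/4)^i)" .
      qed
    qed simp
    finally show ?thesis .
  qed
  have uL2: "in_L2 g u"
  proof (rule L2_of_nn[OF um UL2[of "r 0"]])
    have "(\<integral>\<^sup>+x. ennreal (g x * (cmod (u x - U (r 0) x))\<^sup>2) \<partial>lborel) \<le> ennreal ((1/4)^0)"
      using fatou[of 0] by (simp add: norm_minus_commute)
    then show "(\<integral>\<^sup>+x. ennreal (g x * (cmod (u x - U (r 0) x))\<^sup>2) \<partial>lborel) < \<infinity>"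
      by (simp add: le_less_trans)
  qed
  have du: "L2_norm_sq g (\<lambda>x. u x - U (r i) x) \<le> (1/4)^i" for i
  proof -
    have "in_L2 g (\<lambda>x. u x - U (r i) x)" by (rule L2_diff[OF uL2 UL2])
    then have "integrable lborel (\<lambda>x. g x * (cmod (u x - U (r i) x))\<^sup>2)" unfolding in_L2_def by simp
    then have "ennreal (L2_norm_sq g (\<lambda>x. u x - U (r i) x)) = (\<integral>\<^sup>+x. ennreal (g x * (cmod (U (r i) x - u x))\<^sup>2) \<partial>lborel)"
      unfolding L2_norm_sq_def using gn by (subst nn_integral_eq_integral[symmetric]) (auto simp: norm_minus_commute)
    also have "\<dots> \<le> ennreal ((1/4)^i)" by (rule fatou)
    finally show ?thesis by (subst (asm) ennreal_le_iff) auto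
  qed
  have ipu: "ip u (exp_fun l) = c l" if l: "l \<in> \<Lambda>" for l
  proof -
    have ev: "\<exists>i0. \<forall>i\<ge>i0. ip (U (r i)) (exp_fun l) = c l"
    proof (cases "\<exists>j. l \<in> S j")
      case True
      then obtain j where j: "l \<in> S j" by blast
      have "ip (U (r i)) (exp_fun l) = c l" if "i \<ge> j" for i
      proof -
        have "l \<in> S (r i)" using j Smono[of j "r i"] rge[of i] that by auto
        then show ?thesis unfolding U_def using ip_P_e[OF Sfin Ssub l] by simp
      qed
      then show ?thesis by blast
    next
      case False
      have "(cmod (c l))\<^sup>2 < (1/4)^j" for j
      proof -
        have "q (insert l (S j)) = q (S j) + (cmod (c l))\<^sup>2"
          unfolding q_def using False Sfin by simp
        moreover have "q (insert l (S j)) \<le> \<sigma>" using qle Sfin Ssub l by auto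
        ultimately show ?thesis using Sq[of j] by simp
      qed
      then have "c l = 0"
      proof (rule_tac ccontr)
        assume h: "\<And>j. (cmod (c l))\<^sup>2 < (1/4)^j" and "c l \<noteq> 0"
        then have "(cmod (c l))\<^sup>2 > 0" by simp
        then obtain j where "(1/4::real)^j < (cmod (c l))\<^sup>2" using real_arch_pow_inv[of "(cmod (c l))\<^sup>2" "1/4"] by auto
        then show False using h[of j] by simp
      qed
      then have "ip (U (r i)) (exp_fun l) = c l" for i
        unfolding U_def using ip_P_e[OF Sfin Ssub l] False by simp
      then show ?thesis by blast
    qed
    then obtain i0 where i0: "\<And>i. i \<ge> i0 \<Longrightarrow> ip (U (r i)) (exp_fun l) = c l" by blast
    have "cmod (ip u (exp_fun l) - c l) \<le> t" if t: "t > 0" for t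
    proof -
      obtain n where n: "(1/2::real)^n < 2 * t / (G + 1)"
        using real_arch_pow_inv[of "2 * t / (G + 1)" "1/2"] t G0 by auto
      define i where "i = max n i0"
      have "(1/2::real)^i \<le> (1/2)^n" unfolding i_def by (intro power_decreasing) auto
      then have "(1/2::real)^i < 2 * t / (G + 1)" using n by linarith
      then have small: "(1/2::real)^i * (G + 1) / 2 < t" using G0 by (simp add: less_divide_eq field_simps)
      have "ip u (exp_fun l) - c l = ip (\<lambda>x. u x - U (r i) x) (exp_fun l)"
        using ip_diff_left[OF uL2 UL2 L2_exp] i0[of i] by (simp add: i_def)
      then have "cmod (ip u (exp_fun l) - c l) \<le> (\<integral>x. g x * cmod (u x - U (r i) x) \<partial>lborel)"
        using ip_bound[OF L2_diff[OF uL2 UL2]] by simp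
      also have "\<dots> \<le> (1/2)^i * (G + 1) / 2"
        unfolding G_def by (rule L1_small) (use L2_diff[OF uL2 UL2] du half_pow_sq in auto)
      finally show ?thesis using small by simp
    qed
    then have "cmod (ip u (exp_fun l) - c l) \<le> 0" by (meson dense_ge)
    then show ?thesis by simp
  qed
  have wL2: "in_L2 g (\<lambda>x. f x - u x)" by (rule L2_diff[OF f uL2])
  have "\<forall>l\<in>\<Lambda>. ip (\<lambda>x. f x - u x) (exp_fun l) = 0"
    using ip_diff_left[OF f uL2 L2_exp] ipu by (simp add: c_def)
  then have "L2_norm_sq g (\<lambda>x. f x - u x) = 0" using complete[OF wL2] by blast
  then have AE0: "AE x in lborel. g x * (cmod (f x - u x))\<^sup>2 = 0"
    using wL2 unfolding L2_norm_sq_def in_L2_def using gn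
    by (subst (asm) integral_nonneg_eq_0_iff_AE) auto
  have fm[measurable]: "f \<in> borel_measurable borel" using f L2_meas by auto
  have eqn: "L2_norm_sq g (\<lambda>x. f x - U (r i) x) = L2_norm_sq g (\<lambda>x. u x - U (r i) x)" for i
    unfolding L2_norm_sq_def
  proof (rule integral_cong_AE)
    show "AE x in lborel. g x * (cmod (f x - U (r i) x))\<^sup>2 = g x * (cmod (u x - U (r i) x))\<^sup>2"
      using AE0 by eventually_elim auto
  qed measurable
  obtain i where i: "(1/4::real)^i < \<epsilon>" using real_arch_pow_inv[of \<epsilon> "1/4"] eps by auto
  have "L2_norm_sq g f - q (S (r i)) = L2_norm_sq g (\<lambda>x. f x - U (r i) x)"
    using bessel_eq[OF Sfin Ssub f, of "r i"] unfolding U_def q_def c_def by simp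
  also have "\<dots> \<le> (1/4)^i" using eqn du by simp
  finally have "L2_norm_sq g f - \<epsilon> < q (S (r i))" using i by simp
  then show ?thesis using Sfin Ssub unfolding q_def c_def by blast
qed

theorem parseval:
  assumes f: "in_L2 g f"
  shows "((\<lambda>l. (cmod (ip f (exp_fun l)))\<^sup>2) has_sum L2_norm_sq g f) \<Lambda>"
  unfolding has_sum_def
proof (rule order_tendstoI)
  fix a assume a: "a < L2_norm_sq g f"
  obtain S0 where S0: "finite S0" "S0 \<subseteq> \<Lambda>" "L2_norm_sq g f - (L2_norm_sq g f - a) < (\<Sum>l\<in>S0. (cmod (ip f (exp_fun l)))\<^sup>2)"
    using parseval_approx[OF f, of "L2_norm_sq g f - a"] a by auto
  show "\<forall>\<^sub>F S in finite_subsets_at_top \<Lambda>. a < (\<Sum>l\<in>S. (cmod (ip f (exp_fun l)))\<^sup>2)"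
    unfolding eventually_finite_subsets_at_top
  proof (intro exI conjI allI impI)
    fix Y assume Y: "finite Y \<and> S0 \<subseteq> Y \<and> Y \<subseteq> \<Lambda>"
    have "(\<Sum>l\<in>S0. (cmod (ip f (exp_fun l)))\<^sup>2) \<le> (\<Sum>l\<in>Y. (cmod (ip f (exp_fun l)))\<^sup>2)"
      by (rule sum_mono2) (use Y in auto)
    then show "a < (\<Sum>l\<in>Y. (cmod (ip f (exp_fun l)))\<^sup>2)" using S0 by simp
  qed (use S0 in auto)
next
  fix a assume a: "a > L2_norm_sq g f"
  show "\<forall>\<^sub>F S in finite_subsets_at_top \<Lambda>. (\<Sum>l\<in>S. (cmod (ip f (exp_fun l)))\<^sup>2) < a"
    unfolding eventually_finite_subsets_at_top
  proof (intro exI conjI allI impI)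
    fix Y assume Y: "finite Y \<and> {} \<subseteq> Y \<and> Y \<subseteq> \<Lambda>"
    then show "(\<Sum>l\<in>Y. (cmod (ip f (exp_fun l)))\<^sup>2) < a" using bessel[of Y f] f a by auto
  qed auto
qed

end



lemma key:
  fixes g :: "'a::euclidean_space \<Rightarrow> real"
  assumes gm: "g \<in> borel_measurable borel" and gn: "\<And>x. g x \<ge> 0" and gi: "integrable lborel g"
    and pi: "phase_inv g"
  shows "\<exists>c E. E \<in> sets lborel \<and> (AE x in lborel. g x = c * indicator E x)"
  by (rule const_on_support[OF gm gn]) (rule shift_const[OF gm gn gi pi])

theorem corollary2p6:
  fixes g :: "'a::euclidean_space \<Rightarrow> real"
  assumes g_meas: "g \<in> borel_measurable borel"
    and g_nonneg: "\<And>x. g x \<ge> 0"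
    and g_finite: "integrable lborel g"
  shows "((\<exists>\<nu>. tight_frame_measure g \<nu>) \<longrightarrow>
            (\<exists>c E. E \<in> sets lborel \<and> (AE x in lborel. g x = c * indicator E x)))
       \<and> (\<not> (\<exists>c E. E \<in> sets lborel \<and> (AE x in lborel. g x = c * indicator E x)) \<longrightarrow>
            (\<forall>\<Lambda> w. \<not> tight_weighted_exp_frame g \<Lambda> w) \<and> (\<forall>\<Lambda>. \<not> exp_ONB g \<Lambda>))"
proof -
  interpret wt g using assms by unfold_locales
  have K: "phase_inv g \<Longrightarrow> \<exists>c E. E \<in> sets lborel \<and> (AE x in lborel. g x = c * indicator E x)"
    using key[OF g_meas g_nonneg g_finite] by blast
  have onb_twf: "tight_weighted_exp_frame g \<Lambda> (\<lambda>_. 1)" if "exp_ONB g \<Lambda>" for \<Lambda>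
  proof -
    interpret onb g \<Lambda>
    proof unfold_locales
      show "ip (exp_fun l) (exp_fun l') = (if l = l' then 1 else 0)" if "l \<in> \<Lambda>" "l' \<in> \<Lambda>" for l l'
        using \<open>exp_ONB g \<Lambda>\<close> that unfolding exp_ONB_def inner_exp_ip by blast
      show "L2_norm_sq g f = 0" if "in_L2 g f" "\<forall>l\<in>\<Lambda>. ip f (exp_fun l) = 0" for f
        using \<open>exp_ONB g \<Lambda>\<close> that unfolding exp_ONB_def inner_exp_ip by blast
    qed
    show ?thesis unfolding tight_weighted_exp_frame_def
      by (rule exI[of _ 1]) (simp add: inner_exp_ip parseval)
  qed
  let ?C = "\<exists>c E. E \<in> sets lborel \<and> (AE x in lborel. g x = c * indicator E x)"
  have p1: "(\<exists>\<nu>. tight_frame_measure g \<nu>) \<longrightarrow> ?C"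
  proof
    assume "\<exists>\<nu>. tight_frame_measure g \<nu>"
    then obtain \<nu> where "tight_frame_measure g \<nu>" by blast
    then have "phase_inv g" by (rule tfm_phase_inv[OF g_nonneg])
    then show ?C by (rule K)
  qed
  have p2: "\<not> tight_weighted_exp_frame g \<Lambda> w" if nC: "\<not> ?C" for \<Lambda> w
  proof
    assume "tight_weighted_exp_frame g \<Lambda> w"
    then have "phase_inv g" by (rule twf_phase_inv)
    then have ?C by (rule K)
    with nC show False by contradiction
  qed
  have p3: "\<not> exp_ONB g \<Lambda>" if nC: "\<not> ?C" for \<Lambda>
  proof
    assume "exp_ONB g \<Lambda>"
    then have "tight_weighted_exp_frame g \<Lambda> (\<lambda>_. 1)" by (rule onb_twf)
    with p2[OF nC] show False by blast
  qed
  show ?thesis using p1 p2 p3 by blast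
qed



end
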